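(* Regard the grid parabola $P_t$ and the reference parabola $\Pi_t\colon y=x^2/(2H_t)$ as graphs of functions $P_t(x)$, $\Pi_t(x)$ on $\mathbb R$. Then $\sup_{x\in\mathbb R}|P_t(x)-\Pi_t(x)|=O(t^2\log t)$ as $t\to\infty$.
   Context: Fix an integer $t\ge1$. Let $S_t$ be the set of rational numbers $s$ which, written in lowest terms as $s=a/b$ with $a\in\mathbb Z$ and $b$ a positive integer, satisfy $b\le t$. For $s=a/b\in S_t$ let $v_s=\lfloor t/b\rfloor\,(b,a)$, and $V_t=\{v_s:s\in S_t\}$. The grid parabola $P_t$ is the infinite convex polygonal chain obtained by concatenating the vectors of $V_t$ in order of increasing slope, positioned so that the edge given by $(t,0)$ goes from $(-t/2,0)$ to $(t/2,0)$. $H_t=\sum_{1\le y\le x\le t,\ \gcd(x,y)=1}\lfloor t/x\rfloor\,x$. *)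

theory Defs
  imports "HOL-Analysis.Analysis"
begin

definition S :: "nat \<Rightarrow> rat set" where
  "S t = {s. snd (quotient_of s) \<le> int t}"

definition vec :: "nat \<Rightarrow> rat \<Rightarrow> real \<times> real" where
  "vec t s = (case quotient_of s of (a, b) \<Rightarrow>
      (real_of_int ((int t div b) * b), real_of_int ((int t div b) * a)))"

text \<open>Starting point of the edge of slope s in the chain: edges are concatenated
  by increasing slope, the edge of slope 0 (the vector (t,0)) runs from
  (-t/2,0) to (t/2,0).\<close>
definition edge_start :: "nat \<Rightarrow> rat \<Rightarrow> real \<times> real" where
  "edge_start t s =
     (if 0 \<le> s then (- real t / 2, 0) + (\<Sum>s'\<in>{s'\<in>S t. 0 \<le> s' \<and> s' < s}. vec t s')
      else (- real t / 2, 0) - (\<Sum>s'\<in>{s'\<in>S t. s \<le> s' \<and> s' < 0}. vec t s'))"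

definition grid_parabola :: "nat \<Rightarrow> (real \<times> real) set" where
  "grid_parabola t = (\<Union>s\<in>S t. closed_segment (edge_start t s) (edge_start t s + vec t s))"

definition P :: "nat \<Rightarrow> real \<Rightarrow> real" where
  "P t x = (THE y. (x, y) \<in> grid_parabola t)"

definition H :: "nat \<Rightarrow> nat" where
  "H t = (\<Sum>(x, y)\<in>{(x, y). 1 \<le> y \<and> y \<le> x \<and> x \<le> t \<and> coprime x y}. (t div x) * x)"

definition Pi_ref :: "nat \<Rightarrow> real \<Rightarrow> real" where
  "Pi_ref t x = x\<^sup>2 / (2 * real (H t))"

end

theory Submission
  imports Defs
begin


definition den :: "rat \<Rightarrow> int" where "den r = snd (quotient_of r)"
definition nm :: "rat \<Rightarrow> int" where "nm r = fst (quotient_of r)"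

lemma den_pos: "den r > 0" by (simp add: den_def quotient_of_denom_pos')

lemma quot_eq: "quotient_of r = (nm r, den r)" by (simp add: den_def nm_def)

lemma rat_eq: "r = of_int (nm r) / of_int (den r)"
  using quotient_of_div[OF quot_eq] .

lemma coprime_nm_den: "coprime (nm r) (den r)"
  using quotient_of_coprime[OF quot_eq] .

lemma quotient_of_frac: assumes "b > 0" "coprime a b"
  shows "quotient_of (of_int a / of_int b) = (a, b)"
  using assms by (simp add: Fract_of_int_quotient[symmetric] quotient_of_Fract)

lemma den_frac: "b > 0 \<Longrightarrow> coprime a b \<Longrightarrow> den (of_int a / of_int b) = b"
  by (simp add: den_def quotient_of_frac)
lemma nm_frac: "b > 0 \<Longrightarrow> coprime a b \<Longrightarrow> nm (of_int a / of_int b) = a"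
  by (simp add: nm_def quotient_of_frac)

lemma den_add_int: "den (r + of_int k) = den r"
proof -
  have "r + of_int k = of_int (nm r + k * den r) / of_int (den r)"
    using den_pos[of r] by (subst rat_eq[of r]) (simp add: field_simps)
  moreover have "coprime (nm r + k * den r) (den r)"
    using coprime_nm_den[of r]
    by (metis coprime_iff_gcd_eq_1 gcd.commute gcd_add_mult add.commute)
  ultimately show ?thesis using den_frac den_pos by metis
qed

lemma den_one_minus: "den (1 - r) = den r"
proof -
  have "1 - r = of_int (den r - nm r) / of_int (den r)"
    using den_pos[of r] by (subst rat_eq[of r]) (simp add: field_simps)
  moreover have "coprime (den r - nm r) (den r)"
    using coprime_nm_den[of r]
    by (metis coprime_iff_gcd_eq_1 gcd_diff2)
  ultimately show ?thesis using den_frac den_pos by metis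
qed

lemma of_rat_eq: "(of_rat r :: real) = of_int (nm r) / of_int (den r)"
  by (subst rat_eq[of r]) (simp add: of_rat_divide)

definition wt :: "nat \<Rightarrow> rat \<Rightarrow> real" where
  "wt t r = real_of_int ((int t div den r) * den r)"

lemma S_iff: "r \<in> S t \<longleftrightarrow> den r \<le> int t" by (simp add: S_def den_def)

lemma vec_eq: "vec t r = (wt t r, wt t r * of_rat r)"
  using den_pos[of r]
  by (simp add: vec_def quot_eq wt_def of_rat_eq)

lemma wt_pos: "r \<in> S t \<Longrightarrow> wt t r \<ge> 1"
proof -
  assume "r \<in> S t"
  hence "den r \<le> int t" by (simp add: S_iff)
  hence "int t div den r \<ge> 1" using den_pos[of r]
    by (metis zdiv_mono1 div_self less_irrefl)
  hence "(int t div den r) * den r \<ge> 1" using den_pos[of r]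
    by (metis mult_le_cancel_left1 order_trans int_one_le_iff_zero_less linorder_not_le not_one_le_zero zero_less_mult_iff)
  thus ?thesis unfolding wt_def by (metis of_int_1 of_int_le_iff)
qed

lemma wt_le: "wt t r \<le> real t"
proof -
  have "(int t div den r) * den r \<le> int t" using den_pos[of r]
    by (metis div_mult_mod_eq le_add_same_cancel1 mult.commute pos_mod_sign)
  thus ?thesis unfolding wt_def by (metis of_int_le_iff of_int_of_nat_eq)
qed

lemma wt_shift: "wt t (r + of_int k) = wt t r" by (simp add: wt_def den_add_int)
lemma wt_refl: "wt t (1 - r) = wt t r" by (simp add: wt_def den_one_minus)
lemma S_shift: "r + of_int k \<in> S t \<longleftrightarrow> r \<in> S t" by (simp add: S_iff den_add_int)
lemma S_refl: "1 - r \<in> S t \<longleftrightarrow> r \<in> S t" by (simp add: S_iff den_one_minus)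



definition Iv :: "nat \<Rightarrow> rat \<Rightarrow> rat \<Rightarrow> rat set" where
  "Iv t a b = {r \<in> S t. a \<le> r \<and> r < b}"

lemma nm_eq: "of_int (nm r) = r * of_int (den r)"
  using den_pos[of r] by (subst (2) rat_eq[of r]) simp

lemma finite_Iv: "finite (Iv t a b)"
proof -
  define M where "M = \<lceil>\<bar>a\<bar> + \<bar>b\<bar>\<rceil> * int t"
  have "quotient_of ` Iv t a b \<subseteq> {-M..M} \<times> {1..int t}"
  proof
    fix q assume "q \<in> quotient_of ` Iv t a b"
    then obtain r where r: "r \<in> Iv t a b" "q = quotient_of r" by auto
    have d: "den r \<le> int t" "den r > 0" using r by (auto simp: Iv_def S_iff den_pos)
    have "\<bar>r\<bar> \<le> \<bar>a\<bar> + \<bar>b\<bar>" using r by (auto simp: Iv_def)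
    hence "\<bar>r\<bar> * of_int (den r) \<le> (\<bar>a\<bar> + \<bar>b\<bar>) * of_int (int t)"
      using d by (intro mult_mono) auto
    also have "\<dots> \<le> of_int \<lceil>\<bar>a\<bar> + \<bar>b\<bar>\<rceil> * of_int (int t)"
      by (intro mult_right_mono) auto
    finally have "of_int \<bar>nm r\<bar> \<le> (of_int M :: rat)"
      using d by (simp add: M_def nm_eq abs_mult)
    hence "\<bar>nm r\<bar> \<le> M" by (simp only: of_int_le_iff)
    thus "q \<in> {-M..M} \<times> {1..int t}" using r d by (auto simp: quot_eq)
  qed
  hence "finite (quotient_of ` Iv t a b)" by (rule finite_subset) auto
  moreover have "inj_on quotient_of (Iv t a b)" by (auto intro: inj_onI quotient_of_inject)
  ultimately show ?thesis using finite_imageD by blast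
qed

lemma sum_Iv_split: "a \<le> b \<Longrightarrow> b \<le> c \<Longrightarrow>
  sum f (Iv t a c) = sum f (Iv t a b) + sum f (Iv t b c)"
proof -
  assume "a \<le> b" "b \<le> c"
  hence "Iv t a c = Iv t a b \<union> Iv t b c" by (auto simp: Iv_def)
  moreover have "Iv t a b \<inter> Iv t b c = {}" by (auto simp: Iv_def)
  ultimately show ?thesis by (simp add: sum.union_disjoint finite_Iv)
qed

definition sgnsum :: "nat \<Rightarrow> (rat \<Rightarrow> real) \<Rightarrow> rat \<Rightarrow> real" where
  "sgnsum t f s = (if 0 \<le> s then sum f (Iv t 0 s) else - sum f (Iv t s 0))"

lemma sgnsum_diff: "s \<le> s' \<Longrightarrow> sgnsum t f s' - sgnsum t f s = sum f (Iv t s s')"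
  by (cases "0 \<le> s"; cases "0 \<le> s'")
     (auto simp: sgnsum_def sum_Iv_split[of 0 s s' f t] sum_Iv_split[of s 0 s' f t]
                 sum_Iv_split[of s s' 0 f t])

lemma Iv_empty: "b \<le> a \<Longrightarrow> Iv t a b = {}" by (auto simp: Iv_def)
lemma sgnsum_0: "sgnsum t f 0 = 0" by (simp add: sgnsum_def Iv_empty)

lemma edge_start_eq: "edge_start t s =
   (- real t / 2 + sgnsum t (wt t) s, sgnsum t (\<lambda>r. wt t r * of_rat r) s)"
  by (simp add: edge_start_def sgnsum_def Iv_def vec_eq fst_sum snd_sum prod_eq_iff)

lemma sum_Iv_shift: "sum f (Iv t (a + of_int k) (b + of_int k)) = sum (\<lambda>r. f (r + of_int k)) (Iv t a b)"
proof -
  have "Iv t (a + of_int k) (b + of_int k) = (\<lambda>r. r + of_int k) ` Iv t a b"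
  proof (rule set_eqI, rule iffI)
    fix x assume "x \<in> Iv t (a + of_int k) (b + of_int k)"
    hence "x - of_int k \<in> Iv t a b" using S_shift[where r="x - of_int k" and k=k and t=t] by (auto simp: Iv_def)
    thus "x \<in> (\<lambda>r. r + of_int k) ` Iv t a b" by (auto intro: image_eqI[where x = "x - of_int k"])
  qed (auto simp: Iv_def S_shift)
  thus ?thesis by (simp add: sum.reindex inj_on_def)
qed



lemma seg_char:
  fixes X0 Y0 w m x y :: real
  assumes "w > 0"
  shows "(x, y) \<in> closed_segment (X0, Y0) (X0 + w, Y0 + w * m) \<longleftrightarrow>
         X0 \<le> x \<and> x \<le> X0 + w \<and> y = Y0 + m * (x - X0)"
proof
  assume "(x, y) \<in> closed_segment (X0, Y0) (X0 + w, Y0 + w * m)"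
  then obtain u where u: "0 \<le> u" "u \<le> 1" "(x,y) = (1 - u) *\<^sub>R (X0, Y0) + u *\<^sub>R (X0 + w, Y0 + w * m)"
    by (auto simp: in_segment)
  hence "x = X0 + u * w" "y = Y0 + u * w * m" by (auto simp: algebra_simps)
  thus "X0 \<le> x \<and> x \<le> X0 + w \<and> y = Y0 + m * (x - X0)"
    using u assms by (auto simp: algebra_simps intro: mult_left_le_one_le)
next
  assume h: "X0 \<le> x \<and> x \<le> X0 + w \<and> y = Y0 + m * (x - X0)"
  define u where "u = (x - X0) / w"
  have "0 \<le> u" "u \<le> 1" using h assms by (auto simp: u_def field_simps)
  moreover have "(x,y) = (1 - u) *\<^sub>R (X0, Y0) + u *\<^sub>R (X0 + w, Y0 + w * m)"
  proof -
    have ux: "x = X0 + u * w" using assms by (simp add: u_def)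
    have uy: "y = Y0 + u * w * m" using assms h by (simp add: u_def)
    show ?thesis by (simp add: ux uy algebra_simps)
  qed
  ultimately show "(x, y) \<in> closed_segment (X0, Y0) (X0 + w, Y0 + w * m)"
    by (auto simp: in_segment)
qed

definition Xs :: "nat \<Rightarrow> rat \<Rightarrow> real" where "Xs t s = - real t / 2 + sgnsum t (wt t) s"
definition Ys :: "nat \<Rightarrow> rat \<Rightarrow> real" where "Ys t s = sgnsum t (\<lambda>r. wt t r * of_rat r) s"

lemma gp_char: "(x, y) \<in> grid_parabola t \<longleftrightarrow>
   (\<exists>s\<in>S t. Xs t s \<le> x \<and> x \<le> Xs t s + wt t s \<and> y = Ys t s + of_rat s * (x - Xs t s))"
proof -
  have "\<And>s. s \<in> S t \<Longrightarrow> (x, y) \<in> closed_segment (edge_start t s) (edge_start t s + vec t s) \<longleftrightarrow>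
      Xs t s \<le> x \<and> x \<le> Xs t s + wt t s \<and> y = Ys t s + of_rat s * (x - Xs t s)"
  proof -
    fix s assume "s \<in> S t"
    hence "wt t s > 0" using wt_pos[of s t] by linarith
    thus "?thesis s"
      using seg_char[of "wt t s" x y "Xs t s" "Ys t s" "of_rat s"]
      by (simp add: edge_start_eq vec_eq Xs_def Ys_def)
  qed
  thus ?thesis by (auto simp: grid_parabola_def)
qed

definition Hr :: "nat \<Rightarrow> real" where "Hr t = sum (wt t) (Iv t 0 1)"

lemma int_in_S: "t \<ge> 1 \<Longrightarrow> (of_int n :: rat) \<in> S t"
  by (simp add: S_iff den_def)

lemma Hr_pos: "t \<ge> 1 \<Longrightarrow> Hr t \<ge> 1"
proof -
  assume t: "t \<ge> 1"
  have "0 \<in> Iv t 0 1" using int_in_S[OF t, of 0] by (simp add: Iv_def)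
  moreover have "\<And>r. r \<in> Iv t 0 1 - {0} \<Longrightarrow> 0 \<le> wt t r"
    by (auto simp: Iv_def intro: order_trans[OF _ wt_pos])
  ultimately have "wt t 0 \<le> Hr t" unfolding Hr_def
    using member_le_sum[OF _ _ finite_Iv] by metis
  thus ?thesis using wt_pos[OF int_in_S[OF t, of 0]] by simp
qed

lemma sum_Iv_unit: "sum f (Iv t (of_int n) (of_int n + 1)) = sum (\<lambda>r. f (r + of_int n)) (Iv t 0 1)"
  using sum_Iv_shift[of f t 0 n 1] by (simp add: add.commute)

lemma Xs_int: "Xs t (of_int n) = - real t / 2 + of_int n * Hr t"
proof (induction n rule: int_induct[where k=0])
  case base thus ?case by (simp add: Xs_def sgnsum_0)
next
  case (step1 i)
  have "Xs t (of_int (i+1)) - Xs t (of_int i) = sum (wt t) (Iv t (of_int i) (of_int i + 1))"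
    using sgnsum_diff[of "of_int i" "of_int i + 1" t "wt t"] by (simp add: Xs_def)
  also have "\<dots> = Hr t" by (simp add: sum_Iv_unit wt_shift Hr_def)
  finally show ?case using step1 by (simp add: algebra_simps)
next
  case (step2 i)
  have "Xs t (of_int i) - Xs t (of_int (i - 1)) = sum (wt t) (Iv t (of_int (i - 1)) (of_int (i - 1) + 1))"
    using sgnsum_diff[of "of_int (i - 1)" "of_int i" t "wt t"] by (simp add: Xs_def)
  also have "\<dots> = Hr t" by (simp only: sum_Iv_unit wt_shift Hr_def)
  finally show ?case using step2 by (simp add: algebra_simps)
qed

lemma Xs_diff: "s \<le> s' \<Longrightarrow> Xs t s' - Xs t s = sum (wt t) (Iv t s s')"
  using sgnsum_diff[of s s' t "wt t"] by (simp add: Xs_def)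
lemma Ys_diff: "s \<le> s' \<Longrightarrow> Ys t s' - Ys t s = sum (\<lambda>r. wt t r * of_rat r) (Iv t s s')"
  using sgnsum_diff[of s s'] by (simp add: Ys_def)

lemma sum_Iv_ge: assumes "s \<in> S t" "s < s'"
  shows "sum (wt t) (Iv t s s') = wt t s + sum (wt t) (Iv t s s' - {s})"
    and "sum (wt t) (Iv t s s' - {s}) \<ge> 0"
proof -
  have "s \<in> Iv t s s'" using assms by (simp add: Iv_def)
  thus "sum (wt t) (Iv t s s') = wt t s + sum (wt t) (Iv t s s' - {s})"
    by (simp add: sum.remove finite_Iv)
  show "sum (wt t) (Iv t s s' - {s}) \<ge> 0"
    by (rule sum_nonneg) (auto simp: Iv_def intro: order_trans[OF _ wt_pos])
qed

lemma covering:
  assumes t: "t \<ge> 1"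
  shows "\<exists>s\<in>S t. Xs t s \<le> x \<and> x \<le> Xs t s + wt t s"
proof -
  define n where "n = \<lfloor>(x + real t / 2) / Hr t\<rfloor>"
  have Hp: "Hr t > 0" using Hr_pos[OF t] by simp
  have "of_int n \<le> (x + real t / 2) / Hr t" "(x + real t / 2) / Hr t < of_int n + 1"
    unfolding n_def by linarith+
  moreover have "Xs t (of_int n + 1) = - real t / 2 + (of_int n + 1) * Hr t"
    using Xs_int[of t "n+1"] by simp
  ultimately have xn: "Xs t (of_int n) \<le> x" "x < Xs t (of_int n + 1)"
    using Hp by (auto simp: Xs_int field_simps)
  define F where "F = Iv t (of_int n) (of_int n + 1)"
  define A where "A = {r \<in> F. Xs t r \<le> x}"
  have nF: "of_int n \<in> A" using xn int_in_S[OF t] by (simp add: A_def F_def Iv_def)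
  have finA: "finite A" by (simp add: A_def F_def finite_Iv)
  define s where "s = Max A"
  have sA: "s \<in> A" unfolding s_def using finA nF by (intro Max_in) auto
  have smax: "\<And>r. r \<in> A \<Longrightarrow> r \<le> s" using finA by (simp add: s_def)
  have sS: "s \<in> S t" and sx: "Xs t s \<le> x" and sn: "of_int n \<le> s" "s < of_int n + 1"
    using sA by (auto simp: A_def F_def Iv_def)
  show ?thesis
  proof (rule ccontr)
    assume "\<not> ?thesis"
    hence big: "x > Xs t s + wt t s" using sS sx by auto
    define B where "B = {r \<in> F. s < r}"
    show False
    proof (cases "B = {}")
      case True
      hence e: "Iv t s (of_int n + 1) - {s} = {}" using sn by (auto simp: B_def F_def Iv_def)
      have "Xs t (of_int n + 1) - Xs t s = sum (wt t) (Iv t s (of_int n + 1))"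
        using Xs_diff[of s "of_int n + 1" t] sn(2) by simp
      also have "\<dots> = wt t s" using sum_Iv_ge(1)[OF sS sn(2)] e by simp
      finally show False using big xn(2) by simp
    next
      case False
      have finB: "finite B" by (simp add: B_def F_def finite_Iv)
      define r where "r = Min B"
      have rB: "r \<in> B" unfolding r_def using finB False by (intro Min_in) auto
      have rmin: "\<And>q. q \<in> B \<Longrightarrow> r \<le> q" using finB by (simp add: r_def)
      have sr: "s < r" and rF: "r \<in> F" using rB by (auto simp: B_def)
      have e2: "Iv t s r - {s} = {}"
      proof (rule ccontr)
        assume "Iv t s r - {s} \<noteq> {}"
        then obtain q where q: "q \<in> Iv t s r" "q \<noteq> s" by auto
        have qs: "s < q" "q < r" "q \<in> S t" using q by (auto simp: Iv_def)
        have "q \<in> B" using rF qs sn by (auto simp: B_def F_def Iv_def)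
        hence "r \<le> q" by (rule rmin)
        thus False using qs by simp
      qed
      have "sum (wt t) (Iv t s r) = wt t s" using sum_Iv_ge(1)[OF sS sr] unfolding e2 by simp
      hence "Xs t r = Xs t s + wt t s"
        using Xs_diff[of s r t] sr by simp
      hence "r \<in> A" using big rF by (simp add: A_def)
      thus False using smax sr by force
    qed
  qed
qed

lemma P_value:
  assumes t: "t \<ge> 1"
  shows "\<exists>s\<in>S t. Xs t s \<le> x \<and> x \<le> Xs t s + wt t s \<and> P t x = Ys t s + of_rat s * (x - Xs t s)"
proof -
  obtain s where s: "s \<in> S t" "Xs t s \<le> x" "x \<le> Xs t s + wt t s" using covering[OF t] by blast
  define y where "y = Ys t s + of_rat s * (x - Xs t s)"
  have uniq: "y' = y" if hy: "(x, y') \<in> grid_parabola t" for y'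
  proof -
    obtain s' where s': "s' \<in> S t" "Xs t s' \<le> x" "x \<le> Xs t s' + wt t s'"
      "y' = Ys t s' + of_rat s' * (x - Xs t s')" using hy unfolding gp_char by blast
    have key: "y1 = y2" if a: "s1 \<in> S t" "Xs t s1 \<le> x" "x \<le> Xs t s1 + wt t s1"
        "y1 = Ys t s1 + of_rat s1 * (x - Xs t s1)"
        and b: "s2 \<in> S t" "Xs t s2 \<le> x" "x \<le> Xs t s2 + wt t s2"
        "y2 = Ys t s2 + of_rat s2 * (x - Xs t s2)" and lt: "s1 < s2" for s1 s2 y1 y2
    proof -
      have d: "Xs t s2 - Xs t s1 = wt t s1 + sum (wt t) (Iv t s1 s2 - {s1})"
        using Xs_diff[of s1 s2 t] sum_Iv_ge(1)[OF a(1) lt] lt by simp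
      have "sum (wt t) (Iv t s1 s2 - {s1}) \<le> 0" using d a b by linarith
      hence "sum (wt t) (Iv t s1 s2 - {s1}) = 0" using sum_Iv_ge(2)[OF a(1) lt] by linarith
      moreover have nn: "\<And>q. q \<in> Iv t s1 s2 - {s1} \<Longrightarrow> 0 \<le> wt t q"
      proof -
        fix q assume "q \<in> Iv t s1 s2 - {s1}"
        hence "q \<in> S t" by (simp add: Iv_def)
        thus "0 \<le> wt t q" using wt_pos[of q t] by linarith
      qed
      moreover have "finite (Iv t s1 s2 - {s1})" using finite_Iv by blast
      ultimately have all0: "\<forall>q\<in>Iv t s1 s2 - {s1}. wt t q = 0"
        using sum_nonneg_eq_0_iff by blast
      have e: "Iv t s1 s2 - {s1} = {}"
      proof (rule ccontr)
        assume "Iv t s1 s2 - {s1} \<noteq> {}"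
        then obtain q where q: "q \<in> Iv t s1 s2 - {s1}" by blast
        hence "wt t q \<ge> 1" using wt_pos[of q t] by (simp add: Iv_def)
        thus False using all0 q by simp
      qed
      have "s1 \<in> Iv t s1 s2" using a(1) lt by (simp add: Iv_def)
      hence I1: "Iv t s1 s2 = {s1}" using e by blast
      have "Ys t s2 - Ys t s1 = wt t s1 * of_rat s1"
        using Ys_diff[of s1 s2 t] lt unfolding I1 by simp
      moreover have "Xs t s2 - Xs t s1 = wt t s1"
        using Xs_diff[of s1 s2 t] lt unfolding I1 by simp
      ultimately have Yd: "Ys t s2 - Ys t s1 = wt t s1 * of_rat s1" and Xd: "Xs t s2 - Xs t s1 = wt t s1" by auto
      have xe1: "x - Xs t s1 = wt t s1" using Xd a(3) b(2) by linarith
      have xe2: "x - Xs t s2 = 0" using Xd a(3) b(2) by linarith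
      have "y1 = Ys t s1 + of_rat s1 * wt t s1" using a(4) xe1 by simp
      moreover have "y2 = Ys t s2" using b(4) xe2 by simp
      ultimately show ?thesis using Yd by (simp add: algebra_simps)
    qed
    show ?thesis
    proof (cases s s' rule: linorder_cases)
      case less thus ?thesis using key[OF s(1-3) y_def s'(1-4)] by simp
    next
      case equal thus ?thesis using s'(4) y_def by simp
    next
      case greater thus ?thesis using key[OF s'(1-4) s(1-3) y_def] by simp
    qed
  qed
  have "(x, y) \<in> grid_parabola t" using s by (auto simp: gp_char y_def)
  hence "P t x = y" unfolding P_def using uniq by (rule the_equality)
  thus ?thesis using s y_def by blast
qed



lemma sq_sum_identity:
  fixes w :: "'a::linorder \<Rightarrow> real"
  assumes "finite A"
  shows "(sum w A)\<^sup>2 = (\<Sum>r\<in>A. w r * (w r + 2 * sum w {q\<in>A. q < r}))"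
  using assms
proof (induction A rule: finite_linorder_max_induct)
  case empty thus ?case by simp
next
  case (insert b A)
  have bA: "b \<notin> A" using insert(2) by auto
  have e1: "\<And>r. r \<in> A \<Longrightarrow> {q \<in> insert b A. q < r} = {q\<in>A. q < r}"
    using insert(2) by force
  have e2: "{q \<in> insert b A. q < b} = A" using insert(2) by auto
  have c: "(\<Sum>r\<in>A. w r * (w r + 2 * sum w {q\<in>insert b A. q < r})) = (\<Sum>r\<in>A. w r * (w r + 2 * sum w {q\<in>A. q < r}))"
    by (rule sum.cong) (simp_all only: e1)
  have "(\<Sum>r\<in>insert b A. w r * (w r + 2 * sum w {q\<in>insert b A. q < r}))
      = w b * (w b + 2 * sum w {q\<in>insert b A. q < b}) + (\<Sum>r\<in>A. w r * (w r + 2 * sum w {q\<in>insert b A. q < r}))"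
    using insert(1) bA by (rule sum.insert)
  also have "\<dots> = w b * (w b + 2 * sum w A) + (\<Sum>r\<in>A. w r * (w r + 2 * sum w {q\<in>A. q < r}))"
    unfolding c e2 ..
  also have "\<dots> = w b * (w b + 2 * sum w A) + (sum w A)\<^sup>2" using insert(3) by simp
  also have "\<dots> = (sum w (insert b A))\<^sup>2" using insert(1) bA by (simp add: power2_eq_square algebra_simps)
  finally show ?case by simp
qed

lemma wt_zero: "wt t 0 = real t"
  by (simp add: wt_def den_def)

definition J :: "nat \<Rightarrow> rat set" where "J t = {r \<in> S t. 0 < r \<and> r < 1}"

lemma Iv01: "Iv t 0 1 = insert 0 (J t) \<and> 0 \<notin> J t \<and> finite (J t)" if "t \<ge> 1"
proof -
  have "J t \<subseteq> Iv t 0 1" by (auto simp: J_def Iv_def)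
  hence "finite (J t)" using finite_Iv finite_subset by blast
  moreover have "Iv t 0 1 = insert 0 (J t)" using int_in_S[OF that, of 0]
    by (auto simp: J_def Iv_def)
  ultimately show ?thesis by (simp add: J_def)
qed

lemma J_mem: "r \<in> J t \<Longrightarrow> 1 - r \<in> J t"
  unfolding J_def using S_refl[of r t] by simp

lemma J_refl: "sum (\<lambda>r. f (1 - r)) (J t) = sum f (J t)"
proof (rule sum.reindex_bij_witness[where i="\<lambda>r. 1 - r" and j="\<lambda>r. 1 - r"])
  show "\<And>a. a \<in> J t \<Longrightarrow> 1 - (1 - a) = a" by simp
  show "\<And>a. a \<in> J t \<Longrightarrow> 1 - a \<in> J t" by (rule J_mem)
  show "\<And>a. a \<in> J t \<Longrightarrow> 1 - (1 - a) = a" by simp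
  show "\<And>a. a \<in> J t \<Longrightarrow> 1 - a \<in> J t" by (rule J_mem)
  show "\<And>a. a \<in> J t \<Longrightarrow> f (1 - a) = f (1 - a)" by simp
qed

lemma Hr_alt: "t \<ge> 1 \<Longrightarrow> Hr t = real t + sum (wt t) (J t)"
  using Iv01[of t] by (simp add: Hr_def wt_zero)

definition Am :: "nat \<Rightarrow> real" where "Am t = sum (\<lambda>r. wt t r * of_rat r) (Iv t 0 1)"

lemma Am_eq: assumes "t \<ge> 1" shows "Am t = (Hr t - real t) / 2"
proof -
  define X where "X = sum (\<lambda>r. wt t r * of_rat r) (J t)"
  define W where "W = sum (wt t) (J t)"
  have 1: "Am t = X" using Iv01[OF assms] by (simp add: Am_def X_def)
  have "X = sum (\<lambda>r. wt t r * (1 - of_rat r)) (J t)"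
    using J_refl[of "\<lambda>r. wt t r * of_rat r" t] by (simp add: X_def wt_refl of_rat_diff)
  also have "\<dots> = W - X"
    by (simp add: X_def W_def algebra_simps sum_subtractf)
  finally have 2: "X = W - X" .
  have 3: "Hr t = real t + W" using Hr_alt[OF assms] by (simp add: W_def)
  have 4: "W = 2 * X" using 2 by simp
  show ?thesis unfolding 1 3 4 by simp
qed

lemma Ys_int: assumes t: "t \<ge> 1" shows "Ys t (of_int n) = (Hr t * (of_int n)\<^sup>2 - real t * of_int n) / 2"
proof -
  have step: "Ys t (of_int i + 1) - Ys t (of_int i) = Am t + of_int i * Hr t" for i
  proof -
    have "Ys t (of_int i + 1) - Ys t (of_int i) = sum (\<lambda>r. wt t r * of_rat r) (Iv t (of_int i) (of_int i + 1))"
      using Ys_diff[of "of_int i" "of_int i + 1" t] by simp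
    also have "\<dots> = sum (\<lambda>r. wt t r * of_rat r + wt t r * of_int i) (Iv t 0 1)"
      unfolding sum_Iv_unit wt_shift by (simp add: of_rat_add algebra_simps)
    also have "\<dots> = Am t + of_int i * Hr t"
      by (simp add: sum.distrib Am_def Hr_def sum_distrib_left mult.commute)
    finally show ?thesis .
  qed
  show ?thesis
  proof (induction n rule: int_induct[where k=0])
    case base thus ?case by (simp add: Ys_def sgnsum_0)
  next
    case (step1 i)
    have "Ys t (of_int (i + 1)) = Ys t (of_int i) + Am t + of_int i * Hr t"
      using step[of i] by simp
    also have "\<dots> = (Hr t * (of_int i)\<^sup>2 - real t * of_int i) / 2 + (Hr t - real t) / 2 + of_int i * Hr t"
      using step1(2) Am_eq[OF t] by linarith
    also have "\<dots> = (Hr t * (of_int (i + 1))\<^sup>2 - real t * of_int (i + 1)) / 2"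
      by (simp add: power2_eq_square field_simps)
    finally show ?case .
  next
    case (step2 i)
    have "Ys t (of_int i) = Ys t (of_int (i - 1)) + Am t + of_int (i - 1) * Hr t"
      using step[of "i - 1"] by simp
    hence "Ys t (of_int (i - 1)) = Ys t (of_int i) - Am t - of_int (i - 1) * Hr t" by simp
    also have "\<dots> = (Hr t * (of_int i)\<^sup>2 - real t * of_int i) / 2 - (Hr t - real t) / 2 - of_int (i - 1) * Hr t"
      using step2(2) Am_eq[OF t] by linarith
    also have "\<dots> = (Hr t * (of_int (i - 1))\<^sup>2 - real t * of_int (i - 1)) / 2"
      by (simp add: power2_eq_square field_simps)
    finally show ?case .
  qed
qed



definition cnt :: "nat set \<Rightarrow> real \<Rightarrow> nat" where
  "cnt Ps x = card {a::nat. real a < x \<and> (\<forall>p\<in>Ps. \<not> p dvd a)}"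

lemma finite_below: "finite {a::nat. real a < x \<and> Q a}"
proof -
  have "{a::nat. real a < x \<and> Q a} \<subseteq> {..nat \<lceil>x\<rceil>}" by (auto, linarith)
  thus ?thesis by (rule finite_subset) auto
qed

lemma cnt_empty: "x \<ge> 0 \<Longrightarrow> \<bar>real (cnt {} x) - x\<bar> \<le> 1"
proof -
  assume x: "x \<ge> 0"
  have "{a::nat. real a < x} = {..<nat \<lceil>x\<rceil>}" by (auto, linarith+)
  hence "cnt {} x = nat \<lceil>x\<rceil>" by (simp add: cnt_def)
  thus ?thesis using x by linarith
qed

lemma cnt_insert:
  assumes p: "prime p" and Ps: "\<forall>q\<in>Ps. prime q" and pP: "p \<notin> Ps"
  shows "real (cnt (insert p Ps) x) = real (cnt Ps x) - real (cnt Ps (x / real p))"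
proof -
  define U where "U = {a::nat. real a < x \<and> (\<forall>q\<in>Ps. \<not> q dvd a)}"
  define V where "V = {a \<in> U. p dvd a}"
  define W where "W = {a::nat. real a < x / real p \<and> (\<forall>q\<in>Ps. \<not> q dvd a)}"
  have pp: "real p > 0" using p prime_gt_0_nat by simp
  have "{a::nat. real a < x \<and> (\<forall>q\<in>insert p Ps. \<not> q dvd a)} = U - V"
    by (auto simp: U_def V_def)
  moreover have fU: "finite U" unfolding U_def by (rule finite_below)
  moreover have "V \<subseteq> U" by (auto simp: V_def)
  ultimately have c1: "cnt (insert p Ps) x = card U - card V"
    by (simp add: cnt_def card_Diff_subset finite_subset)
  have cVU: "card V \<le> card U" using fU \<open>V \<subseteq> U\<close> card_mono by blast
  have "V = (\<lambda>a. p * a) ` W"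
  proof (rule set_eqI, rule iffI)
    fix a assume "a \<in> V"
    then obtain k where k: "a = p * k" and aU: "a \<in> U" by (auto simp: V_def)
    have "real k < x / real p" using aU k pp by (simp add: U_def field_simps mult.commute)
    moreover have "\<forall>q\<in>Ps. \<not> q dvd k" using aU k by (auto simp: U_def)
    ultimately show "a \<in> (\<lambda>a. p * a) ` W" using k by (auto simp: W_def)
  next
    fix a assume "a \<in> (\<lambda>a. p * a) ` W"
    then obtain k where k: "a = p * k" "k \<in> W" by auto
    have "real a < x" using k pp by (simp add: W_def field_simps mult.commute)
    moreover have "\<not> q dvd a" if q: "q \<in> Ps" for q
    proof
      assume "q dvd a"
      hence "q dvd p \<or> q dvd k" using k Ps q by (simp add: prime_dvd_mult_iff)
      moreover have "\<not> q dvd p" using Ps q p pP primes_dvd_imp_eq by blast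
      ultimately show False using k q by (auto simp: W_def)
    qed
    ultimately show "a \<in> V" using k by (auto simp: V_def U_def)
  qed
  moreover have "inj_on (\<lambda>a. p * a) W" using pp by (auto simp: inj_on_def)
  ultimately have "card V = cnt Ps (x / real p)" by (simp add: card_image cnt_def W_def)
  moreover have "card U = cnt Ps x" by (simp add: cnt_def U_def)
  ultimately show ?thesis using c1 cVU by (simp add: of_nat_diff)
qed

lemma cnt_bound:
  assumes "finite Ps" "\<forall>q\<in>Ps. prime q"
  shows "\<forall>x\<ge>0. \<bar>real (cnt Ps x) - x * (\<Prod>p\<in>Ps. 1 - 1 / real p)\<bar> \<le> 2 ^ card Ps"
  using assms
proof (induction Ps rule: finite_induct)
  case empty thus ?case using cnt_empty by simp
next
  case (insert p Ps)
  show ?case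
  proof (intro allI impI)
    fix x :: real assume x: "x \<ge> 0"
    define Pr where "Pr = (\<Prod>p\<in>Ps. 1 - 1 / real p)"
    have pp: "real p > 0" using insert(4) prime_gt_0_nat by simp
    have IH: "\<forall>y\<ge>0. \<bar>real (cnt Ps y) - y * Pr\<bar> \<le> 2 ^ card Ps" using insert by (simp add: Pr_def)
    have IH1: "\<bar>real (cnt Ps x) - x * Pr\<bar> \<le> 2 ^ card Ps" using IH x by blast
    have "x / real p \<ge> 0" using x pp by simp
    hence IH2: "\<bar>real (cnt Ps (x / real p)) - x / real p * Pr\<bar> \<le> 2 ^ card Ps" using IH by blast
    have e1: "real (cnt (insert p Ps) x) = real (cnt Ps x) - real (cnt Ps (x / real p))"
      using cnt_insert[of p Ps x] insert by simp
    have e2: "x * (\<Prod>p\<in>insert p Ps. 1 - 1 / real p) = x * Pr - x / real p * Pr"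
      using insert(1,2) by (simp add: Pr_def algebra_simps)
    have "real (cnt (insert p Ps) x) - x * (\<Prod>p\<in>insert p Ps. 1 - 1 / real p)
       = (real (cnt Ps x) - x * Pr) - (real (cnt Ps (x / real p)) - x / real p * Pr)"
      unfolding e1 e2 by simp
    hence "\<bar>real (cnt (insert p Ps) x) - x * (\<Prod>p\<in>insert p Ps. 1 - 1 / real p)\<bar>
        \<le> \<bar>real (cnt Ps x) - x * Pr\<bar> + \<bar>real (cnt Ps (x / real p)) - x / real p * Pr\<bar>"
      by (simp only: abs_triangle_ineq4)
    also have "\<dots> \<le> 2 ^ card (insert p Ps)" using IH1 IH2 insert(1,2) by simp
    finally show "\<bar>real (cnt (insert p Ps) x) - x * (\<Prod>p\<in>insert p Ps. 1 - 1 / real p)\<bar> \<le> 2 ^ card (insert p Ps)" .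
  qed
qed

lemma coprime_pf: "b \<noteq> 0 \<Longrightarrow> coprime a b \<longleftrightarrow> (\<forall>p\<in>prime_factors b. \<not> p dvd (a::nat))"
proof
  assume b: "b \<noteq> 0" and c: "coprime a b"
  show "\<forall>p\<in>prime_factors b. \<not> p dvd a"
  proof (intro ballI notI)
    fix p assume "p \<in> prime_factors b" "p dvd a"
    hence "p = 1" using c coprime_common_divisor_nat by blast
    thus False using \<open>p \<in> prime_factors b\<close> by (metis in_prime_factors_imp_prime not_prime_1)
  qed
next
  assume b: "b \<noteq> 0" and h: "\<forall>p\<in>prime_factors b. \<not> p dvd a"
  show "coprime a b"
  proof (rule ccontr)
    assume "\<not> coprime a b"
    hence "gcd a b \<noteq> 1" by (metis coprime_iff_gcd_eq_1)
    then obtain p where p: "prime p" "p dvd gcd a b" using prime_factor_nat by blast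
    hence "p \<in> prime_factors b" using b by (auto intro: prime_factorsI)
    thus False using h p by auto
  qed
qed

definition cb :: "nat \<Rightarrow> real \<Rightarrow> nat" where
  "cb b x = card {a::nat. real a < x \<and> coprime a b}"

lemma cb_cnt: "b \<noteq> 0 \<Longrightarrow> cb b x = cnt (prime_factors b) x"
  by (simp add: cb_def cnt_def coprime_pf)

lemma cb_disc:
  assumes b: "b \<ge> 1" and \<sigma>: "0 \<le> \<sigma>" "\<sigma> \<le> 1"
  shows "\<bar>real (cb b (\<sigma> * real b)) - \<sigma> * real (cb b (real b))\<bar> \<le> 2 * 2 ^ card (prime_factors b)"
proof -
  define K where "K = real b * (\<Prod>p\<in>prime_factors b. 1 - 1 / real p)"
  have B: "\<forall>x\<ge>0. \<bar>real (cnt (prime_factors b) x) - x * (\<Prod>p\<in>prime_factors b. 1 - 1 / real p)\<bar> \<le> 2 ^ card (prime_factors b)"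
    by (rule cnt_bound) auto
  have 1: "\<bar>real (cb b (\<sigma> * real b)) - \<sigma> * K\<bar> \<le> 2 ^ card (prime_factors b)"
    using B[rule_format, of "\<sigma> * real b"] \<sigma> b by (simp add: cb_cnt K_def mult.assoc)
  have 2: "\<bar>real (cb b (real b)) - K\<bar> \<le> 2 ^ card (prime_factors b)"
    using B[rule_format, of "real b"] b by (simp add: cb_cnt K_def)
  have "\<bar>\<sigma> * real (cb b (real b)) - \<sigma> * K\<bar> = \<sigma> * \<bar>real (cb b (real b)) - K\<bar>"
    using \<sigma> by (simp add: abs_mult right_diff_distrib[symmetric])
  also have "\<dots> \<le> 1 * 2 ^ card (prime_factors b)" using 2 \<sigma> by (intro mult_mono) auto
  finally show ?thesis using 1 by linarith
qed

lemma pow_pf_le_divisors: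
  assumes b: "b \<ge> (1::nat)"
  shows "2 ^ card (prime_factors b) \<le> card {d. d dvd b}"
proof -
  have fin: "finite (prime_factors b)" by simp
  have dvd: "\<Prod>D dvd b" if "D \<subseteq> prime_factors b" for D
  proof -
    have "finite D" using that fin finite_subset by blast
    thus ?thesis using that
    proof (induction D rule: finite_induct)
      case empty thus ?case by simp
    next
      case (insert p D)
      have pr: "prime p" "p dvd b" using insert(4) by auto
      have "\<not> p dvd \<Prod>D"
      proof
        assume "p dvd \<Prod>D"
        then obtain q where q: "q \<in> D" "p dvd q" using prime_dvd_prod_iff[OF insert(1) pr(1), of id] by auto
        have "prime q" using q insert(4) by auto
        hence "p = q" using primes_dvd_imp_eq pr(1) q(2) by blast
        thus False using q insert(2) by simp
      qed
      hence "coprime p (\<Prod>D)" using prime_imp_coprime pr(1) by blast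
      thus ?case using insert pr by (simp add: divides_mult)
    qed
  qed
  have inj: "inj_on Prod (Pow (prime_factors b))"
  proof (rule inj_onI)
    fix D D' assume D: "D \<in> Pow (prime_factors b)" and D': "D' \<in> Pow (prime_factors b)" and e: "\<Prod>D = \<Prod>D'"
    have char: "\<And>E. E \<subseteq> prime_factors b \<Longrightarrow> E = {p. prime p \<and> p dvd \<Prod>E}"
    proof -
      fix E assume E: "E \<subseteq> prime_factors b"
      hence fE: "finite E" using fin finite_subset by blast
      show "E = {p. prime p \<and> p dvd \<Prod>E}"
      proof (rule set_eqI, rule iffI)
        fix p assume "p \<in> E"
        thus "p \<in> {p. prime p \<and> p dvd \<Prod>E}" using E fE by (auto intro: dvd_prodI)
      next
        fix p assume "p \<in> {p. prime p \<and> p dvd \<Prod>E}"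
        hence p: "prime p" "p dvd \<Prod>E" by auto
        then obtain q where q: "q \<in> E" "p dvd q" using prime_dvd_prod_iff[OF fE p(1), of id] by auto
        have "prime q" using q E by auto
        hence "p = q" using primes_dvd_imp_eq p(1) q(2) by blast
        thus "p \<in> E" using q by simp
      qed
    qed
    show "D = D'" using char[of D] char[of D'] D D' e by auto
  qed
  have "Prod ` Pow (prime_factors b) \<subseteq> {d. d dvd b}" using dvd by auto
  moreover have "finite {d. d dvd b}" using b by (simp add: finite_divisors_nat)
  ultimately have "card (Prod ` Pow (prime_factors b)) \<le> card {d. d dvd b}" by (rule card_mono[rotated])
  thus ?thesis using card_image[OF inj] card_Pow[OF fin] by simp
qed



lemma Hr_ge_t: "t \<ge> 1 \<Longrightarrow> real t \<le> Hr t"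
proof -
  assume t: "t \<ge> 1"
  have "0 \<le> sum (wt t) (J t)"
    by (rule sum_nonneg) (auto simp: J_def intro: order_trans[OF _ wt_pos])
  thus ?thesis using Hr_alt[OF t] by simp
qed

lemma Xs_floor: "Xs t r = Xs t (of_int \<lfloor>r\<rfloor>) + sum (wt t) (Iv t 0 (r - of_int \<lfloor>r\<rfloor>))"
proof -
  have le: "of_int \<lfloor>r\<rfloor> \<le> r" by (rule of_int_floor_le)
  have "Xs t r - Xs t (of_int \<lfloor>r\<rfloor>) = sum (wt t) (Iv t (of_int \<lfloor>r\<rfloor>) r)"
    using Xs_diff[OF le] by simp
  also have "\<dots> = sum (wt t) (Iv t (0 + of_int \<lfloor>r\<rfloor>) ((r - of_int \<lfloor>r\<rfloor>) + of_int \<lfloor>r\<rfloor>))" by simp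
  also have "\<dots> = sum (wt t) (Iv t 0 (r - of_int \<lfloor>r\<rfloor>))"
    unfolding sum_Iv_shift wt_shift ..
  finally show ?thesis by simp
qed

lemma err_bound:
  assumes t: "t \<ge> 1"
    and hD: "\<forall>\<sigma>::rat. 0 \<le> \<sigma> \<and> \<sigma> < 1 \<longrightarrow> \<bar>Hr t * of_rat \<sigma> - sum (wt t) (Iv t 0 \<sigma>)\<bar> \<le> \<Delta>"
  shows "\<bar>Hr t * of_rat r - Xs t r\<bar> \<le> \<Delta> + real t / 2"
proof -
  define n where "n = \<lfloor>r\<rfloor>"
  define \<sigma> where "\<sigma> = r - of_int n"
  have fc: "of_int n \<le> r" "r < of_int n + 1" using floor_correct[of r] by (auto simp: n_def)
  have s01: "0 \<le> \<sigma>" "\<sigma> < 1" unfolding \<sigma>_def using fc by linarith+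
  have r: "(of_rat r :: real) = of_rat \<sigma> + of_int n" by (simp add: \<sigma>_def of_rat_diff)
  have "Hr t * of_rat r - Xs t r = (Hr t * of_rat \<sigma> - sum (wt t) (Iv t 0 \<sigma>)) + real t / 2"
    using Xs_floor[of t r] Xs_int[of t n] unfolding r by (simp add: n_def \<sigma>_def algebra_simps)
  moreover have "\<bar>Hr t * of_rat \<sigma> - sum (wt t) (Iv t 0 \<sigma>)\<bar> \<le> \<Delta>" using hD s01 by blast
  ultimately show ?thesis using abs_triangle_ineq[of "Hr t * of_rat \<sigma> - sum (wt t) (Iv t 0 \<sigma>)" "real t / 2"] by simp
qed

lemma Ys_Xs_identity:
  assumes t: "t \<ge> 1" and n: "of_int n \<le> s"
  shows "2 * Hr t * Ys t s - (Xs t s)\<^sup>2 = - (real t)\<^sup>2 / 4 +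
     (\<Sum>r\<in>Iv t (of_int n) s. wt t r * (2 * (Hr t * of_rat r - Xs t r) - wt t r))"
proof -
  define A where "A = Iv t (of_int n) s"
  have fA: "finite A" by (simp add: A_def finite_Iv)
  define X0 where "X0 = Xs t (of_int n)"
  define Y0 where "Y0 = Ys t (of_int n)"
  have q: "\<And>r. r \<in> A \<Longrightarrow> sum (wt t) {q\<in>A. q < r} = Xs t r - X0"
  proof -
    fix r assume "r \<in> A"
    hence "{q\<in>A. q < r} = Iv t (of_int n) r" "of_int n \<le> r" by (auto simp: A_def Iv_def)
    thus "sum (wt t) {q\<in>A. q < r} = Xs t r - X0" using Xs_diff[of "of_int n" r t] by (simp add: X0_def)
  qed
  have L: "Xs t s - X0 = sum (wt t) A" using Xs_diff[OF n] by (simp add: A_def X0_def)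
  have Y: "Ys t s - Y0 = (\<Sum>r\<in>A. wt t r * of_rat r)" using Ys_diff[OF n] by (simp add: A_def Y0_def)
  have sq: "(sum (wt t) A)\<^sup>2 = (\<Sum>r\<in>A. wt t r * (wt t r + 2 * (Xs t r - X0)))"
  proof -
    have "(\<Sum>r\<in>A. wt t r * (wt t r + 2 * sum (wt t) {q\<in>A. q < r})) = (\<Sum>r\<in>A. wt t r * (wt t r + 2 * (Xs t r - X0)))"
      by (rule sum.cong) (simp_all add: q)
    thus ?thesis using sq_sum_identity[OF fA, of "wt t"] by simp
  qed
  have "(Xs t s)\<^sup>2 - X0\<^sup>2 = (sum (wt t) A)\<^sup>2 + 2 * X0 * sum (wt t) A"
    using L by (simp add: power2_eq_square algebra_simps)
  also have "\<dots> = (\<Sum>r\<in>A. wt t r * (wt t r + 2 * (Xs t r - X0))) + (\<Sum>r\<in>A. 2 * X0 * wt t r)"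
    by (simp add: sq sum_distrib_left)
  also have "\<dots> = (\<Sum>r\<in>A. wt t r * (wt t r + 2 * Xs t r))"
    by (simp add: sum.distrib[symmetric] algebra_simps)
  finally have XX: "(Xs t s)\<^sup>2 = X0\<^sup>2 + (\<Sum>r\<in>A. wt t r * (wt t r + 2 * Xs t r))" by simp
  have YY: "2 * Hr t * Ys t s = 2 * Hr t * Y0 + (\<Sum>r\<in>A. wt t r * (2 * Hr t * of_rat r))"
    using Y by (simp add: sum_distrib_left algebra_simps)
  have base: "2 * Hr t * Y0 - X0\<^sup>2 = - (real t)\<^sup>2 / 4"
    unfolding Y0_def X0_def Xs_int Ys_int[OF t] by (simp add: power2_eq_square field_simps)
  have "2 * Hr t * Ys t s - (Xs t s)\<^sup>2 = (2 * Hr t * Y0 - X0\<^sup>2) +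
     ((\<Sum>r\<in>A. wt t r * (2 * Hr t * of_rat r)) - (\<Sum>r\<in>A. wt t r * (wt t r + 2 * Xs t r)))"
    using XX YY by simp
  also have "(\<Sum>r\<in>A. wt t r * (2 * Hr t * of_rat r)) - (\<Sum>r\<in>A. wt t r * (wt t r + 2 * Xs t r))
      = (\<Sum>r\<in>A. wt t r * (2 * (Hr t * of_rat r - Xs t r) - wt t r))"
    by (simp add: sum_subtractf[symmetric] algebra_simps)
  finally show ?thesis using base by (simp add: A_def)
qed

lemma main_bound:
  assumes t: "t \<ge> 1" and D0: "\<Delta> \<ge> 0"
    and hD: "\<forall>\<sigma>::rat. 0 \<le> \<sigma> \<and> \<sigma> < 1 \<longrightarrow> \<bar>Hr t * of_rat \<sigma> - sum (wt t) (Iv t 0 \<sigma>)\<bar> \<le> \<Delta>"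
  shows "\<bar>P t x - x\<^sup>2 / (2 * Hr t)\<bar> \<le> 2 * \<Delta> + 3 * real t"
proof -
  obtain s where s: "s \<in> S t" "Xs t s \<le> x" "x \<le> Xs t s + wt t s"
      "P t x = Ys t s + of_rat s * (x - Xs t s)" using P_value[OF t] by blast
  define n where "n = \<lfloor>s\<rfloor>"
  have fc: "of_int n \<le> s" "s < of_int n + 1" using floor_correct[of s] by (auto simp: n_def)
  define \<theta> where "\<theta> = x - Xs t s"
  have th: "0 \<le> \<theta>" "\<theta> \<le> real t" using s wt_le[of t s] by (auto simp: \<theta>_def)
  define A where "A = Iv t (of_int n) s"
  define e where "e = (\<lambda>r. Hr t * of_rat r - Xs t r)"
  have eb: "\<And>r. \<bar>e r\<bar> \<le> \<Delta> + real t / 2" unfolding e_def by (rule err_bound[OF t hD])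
  have Ht: "real t \<le> Hr t" by (rule Hr_ge_t[OF t])
  have Hp: "Hr t > 0" using Ht t by simp
  define \<Sigma> where "\<Sigma> = (\<Sum>r\<in>A. wt t r * (2 * e r - wt t r))"
  have id: "2 * Hr t * Ys t s - (Xs t s)\<^sup>2 = - (real t)\<^sup>2 / 4 + \<Sigma>"
    using Ys_Xs_identity[OF t fc(1)] by (simp add: \<Sigma>_def A_def e_def)
  have xe: "x = Xs t s + \<theta>" by (simp add: \<theta>_def)
  have main: "2 * Hr t * (P t x - x\<^sup>2 / (2 * Hr t)) = - (real t)\<^sup>2 / 4 + \<Sigma> + \<theta> * (2 * e s - \<theta>)"
  proof -
    have P\<theta>: "P t x = Ys t s + of_rat s * \<theta>" using s(4) by (simp add: \<theta>_def)
    have "2 * Hr t * (P t x - x\<^sup>2 / (2 * Hr t)) = 2 * Hr t * P t x - x\<^sup>2"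
      using Hp by (simp add: right_diff_distrib)
    also have "\<dots> = 2 * Hr t * (Ys t s + of_rat s * \<theta>) - (Xs t s + \<theta>)\<^sup>2"
      unfolding P\<theta> using xe by simp
    also have "\<dots> = (2 * Hr t * Ys t s - (Xs t s)\<^sup>2) + \<theta> * (2 * e s - \<theta>)"
      by (simp add: e_def power2_eq_square algebra_simps)
    finally show ?thesis using id by simp
  qed
  have wA: "\<And>r. r \<in> A \<Longrightarrow> 0 \<le> wt t r \<and> wt t r \<le> real t"
    using wt_pos wt_le by (fastforce simp: A_def Iv_def)
  have "\<bar>\<Sigma>\<bar> \<le> (\<Sum>r\<in>A. \<bar>wt t r * (2 * e r - wt t r)\<bar>)" unfolding \<Sigma>_def by (rule sum_abs)
  also have "\<dots> \<le> (\<Sum>r\<in>A. wt t r * (2 * \<Delta> + 2 * real t))"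
  proof (rule sum_mono)
    fix r assume r: "r \<in> A"
    have "\<bar>2 * e r - wt t r\<bar> \<le> 2 * \<Delta> + 2 * real t" using eb[of r] wA[OF r] by linarith
    thus "\<bar>wt t r * (2 * e r - wt t r)\<bar> \<le> wt t r * (2 * \<Delta> + 2 * real t)"
      using wA[OF r] by (simp add: abs_mult mult_left_mono)
  qed
  also have "\<dots> = sum (wt t) A * (2 * \<Delta> + 2 * real t)" by (simp add: sum_distrib_right)
  also have "\<dots> \<le> Hr t * (2 * \<Delta> + 2 * real t)"
  proof (rule mult_right_mono)
    have "A \<subseteq> Iv t (of_int n) (of_int n + 1)" using fc by (auto simp: A_def Iv_def)
    hence "sum (wt t) A \<le> sum (wt t) (Iv t (of_int n) (of_int n + 1))"
      by (intro sum_mono2 finite_Iv) (auto simp: Iv_def intro: order_trans[OF _ wt_pos])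
    also have "\<dots> = Hr t" unfolding sum_Iv_unit wt_shift Hr_def ..
    finally show "sum (wt t) A \<le> Hr t" .
  qed (use D0 in simp)
  finally have S1: "\<bar>\<Sigma>\<bar> \<le> Hr t * (2 * \<Delta> + 2 * real t)" .
  have "\<bar>\<theta> * (2 * e s - \<theta>)\<bar> = \<theta> * \<bar>2 * e s - \<theta>\<bar>" using th by (simp add: abs_mult)
  also have "\<dots> \<le> real t * (2 * \<Delta> + 2 * real t)"
  proof -
    have "\<bar>2 * e s - \<theta>\<bar> \<le> 2 * \<Delta> + 2 * real t" using eb[of s] th by linarith
    thus ?thesis using th by (intro mult_mono) auto
  qed
  also have "\<dots> \<le> Hr t * (2 * \<Delta> + 2 * real t)" using Ht D0 by (intro mult_right_mono) auto
  finally have S2: "\<bar>\<theta> * (2 * e s - \<theta>)\<bar> \<le> Hr t * (2 * \<Delta> + 2 * real t)" .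
  have S0: "(real t)\<^sup>2 / 4 \<le> Hr t * real t / 4" using Ht by (simp add: power2_eq_square mult_right_mono)
  have "\<bar>2 * Hr t * (P t x - x\<^sup>2 / (2 * Hr t))\<bar> \<le> Hr t * real t / 4 + Hr t * (2 * \<Delta> + 2 * real t) + Hr t * (2 * \<Delta> + 2 * real t)"
    unfolding main using S0 S1 S2 abs_triangle_ineq[of "- (real t)\<^sup>2 / 4 + \<Sigma>" "\<theta> * (2 * e s - \<theta>)"]
      abs_triangle_ineq[of "- (real t)\<^sup>2 / 4" "\<Sigma>"] by simp
  also have "\<dots> = (2 * Hr t) * (real t / 8 + 2 * \<Delta> + 2 * real t)" by (simp add: algebra_simps)
  finally have "(2 * Hr t) * \<bar>P t x - x\<^sup>2 / (2 * Hr t)\<bar> \<le> (2 * Hr t) * (real t / 8 + 2 * \<Delta> + 2 * real t)"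
    using Hp by (simp add: abs_mult)
  hence "\<bar>P t x - x\<^sup>2 / (2 * Hr t)\<bar> \<le> real t / 8 + 2 * \<Delta> + 2 * real t"
  proof -
    have c: "0 < 2 * Hr t" using Hp by simp
    show ?thesis using \<open>(2 * Hr t) * \<bar>P t x - x\<^sup>2 / (2 * Hr t)\<bar> \<le> (2 * Hr t) * (real t / 8 + 2 * \<Delta> + 2 * real t)\<close>
      mult_le_cancel_left_pos[OF c] by blast
  qed
  thus ?thesis by simp
qed



definition Wn :: "nat \<Rightarrow> nat \<Rightarrow> nat" where "Wn t b = (t div b) * b"

lemma nm_nonneg: "0 \<le> r \<Longrightarrow> 0 \<le> nm r"
proof -
  assume "0 \<le> r"
  hence "0 \<le> r * of_int (den r)" using den_pos[of r] by simp
  hence "(0::rat) \<le> of_int (nm r)" by (simp add: nm_eq)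
  thus ?thesis by simp
qed

lemma sum_pairs:
  fixes \<sigma> :: rat
  assumes "0 \<le> \<sigma>" "\<sigma> \<le> 1"
  shows "sum (wt t) (Iv t 0 \<sigma>) = (\<Sum>b\<in>{1..t}. real (Wn t b) * real (cb b (of_rat \<sigma> * real b)))"
proof -
  define Qb where "Qb = (\<lambda>b. {a::nat. real a < of_rat \<sigma> * real b \<and> coprime a b})"
  define Q where "Q = Sigma {1..t} Qb"
  have finQb: "\<And>b. finite (Qb b)" unfolding Qb_def by (rule finite_below)
  have "(\<Sum>b\<in>{1..t}. real (Wn t b) * real (cb b (of_rat \<sigma> * real b)))
      = (\<Sum>b\<in>{1..t}. \<Sum>a\<in>Qb b. real (Wn t b))"
    by (simp add: cb_def Qb_def mult.commute)
  also have "\<dots> = (\<Sum>(b,a)\<in>Q. real (Wn t b))"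
    unfolding Q_def by (rule sum.Sigma) (auto simp: finQb)
  finally have calc: "(\<Sum>b\<in>{1..t}. real (Wn t b) * real (cb b (of_rat \<sigma> * real b))) = (\<Sum>(b,a)\<in>Q. real (Wn t b))" .
  have X: "sum (wt t) (Iv t 0 \<sigma>) = (\<Sum>(b,a)\<in>Q. real (Wn t b))"
  proof (rule sum.reindex_bij_witness[where i = "\<lambda>(b,a). of_nat a / of_nat b"
        and j = "\<lambda>r. (nat (den r), nat (nm r))"])
    fix r assume r: "r \<in> Iv t 0 \<sigma>"
    have r0: "0 \<le> r" "r < \<sigma>" "r \<in> S t" using r by (auto simp: Iv_def)
    have nn: "0 \<le> nm r" by (rule nm_nonneg[OF r0(1)])
    have dp: "0 < den r" by (rule den_pos)
    show "(case (nat (den r), nat (nm r)) of (b, a) \<Rightarrow> of_nat a / of_nat b) = r"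
      using nn dp by (simp add: rat_eq[of r, symmetric])
    have "real (nat (nm r)) < of_rat \<sigma> * real (nat (den r))"
    proof -
      have "real (nat (nm r)) = of_rat r * of_int (den r)"
        using nn dp by (simp add: of_rat_eq)
      also have "\<dots> < of_rat \<sigma> * of_int (den r)" using r0(2) dp by (simp add: of_rat_less)
      finally show ?thesis using dp by simp
    qed
    moreover have "coprime (nat (nm r)) (nat (den r))"
    proof -
      have "int (nat (nm r)) = nm r" "int (nat (den r)) = den r" using nn dp by simp_all
      hence "coprime (int (nat (nm r))) (int (nat (den r)))" using coprime_nm_den[of r] by simp
      thus ?thesis by (simp only: coprime_int_iff)
    qed
    moreover have "1 \<le> nat (den r)" "nat (den r) \<le> t" using dp r0(3) by (auto simp: S_iff)
    ultimately show "(nat (den r), nat (nm r)) \<in> Q" by (simp add: Q_def Qb_def)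
    have "real (Wn t (nat (den r))) = wt t r"
    proof -
      have i: "int t div den r = int (t div nat (den r))" using dp by (simp add: zdiv_int)
      have j: "den r = int (nat (den r))" using dp by simp
      have "wt t r = real_of_int (int (t div nat (den r)) * int (nat (den r)))"
        unfolding wt_def i using j by simp
      thus ?thesis by (simp add: Wn_def)
    qed
    thus "(case (nat (den r), nat (nm r)) of (b, a) \<Rightarrow> real (Wn t b)) = wt t r" by simp
  next
    fix p assume p: "p \<in> Q"
    obtain b a where ba: "p = (b, a)" by (cases p)
    have b: "1 \<le> b" "b \<le> t" and a: "real a < of_rat \<sigma> * real b" and c: "coprime a b"
      using p ba by (auto simp: Q_def Qb_def)
    have ci: "coprime (int a) (int b)" using c by simp
    have bi: "int b > 0" using b by simp
    have eq: "(of_nat a / of_nat b :: rat) = of_int (int a) / of_int (int b)" by simp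
    have dn: "den (of_nat a / of_nat b) = int b" "nm (of_nat a / of_nat b) = int a"
      unfolding eq using den_frac[OF bi ci] nm_frac[OF bi ci] by auto
    show "(nat (den (case p of (b, a) \<Rightarrow> of_nat a / of_nat b)), nat (nm (case p of (b, a) \<Rightarrow> of_nat a / of_nat b))) = p"
      using dn ba by simp
    have "of_rat (of_nat a / of_nat b :: rat) < (of_rat \<sigma> :: real)"
      using a b by (simp add: of_rat_divide field_simps)
    hence lt: "(of_nat a / of_nat b :: rat) < \<sigma>" by (simp add: of_rat_less)
    have "of_nat a / of_nat b \<in> S t" using dn b by (simp add: S_iff)
    thus "(case p of (b, a) \<Rightarrow> of_nat a / of_nat b) \<in> Iv t 0 \<sigma>" using lt ba by (simp add: Iv_def)
  qed
  show ?thesis using calc X by simp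
qed

lemma card_coprime_shift:
  assumes b: "b \<ge> (1::nat)"
  shows "card {y. 1 \<le> y \<and> y \<le> b \<and> coprime b y} = cb b (real b)"
proof -
  have e: "{a::nat. real a < real b \<and> coprime a b} = {a. a < b \<and> coprime a b}" by auto
  have "card {y. 1 \<le> y \<and> y \<le> b \<and> coprime b y} = card {a. a < b \<and> coprime a b}"
  proof (rule card_bij_eq[where f = "\<lambda>y. if y = b then 0 else y" and g = "\<lambda>a. if a = 0 then b else a"])
    show "inj_on (\<lambda>y. if y = b then 0 else y) {y. 1 \<le> y \<and> y \<le> b \<and> coprime b y}"
      by (auto simp: inj_on_def)
    show "(\<lambda>y. if y = b then 0 else y) ` {y. 1 \<le> y \<and> y \<le> b \<and> coprime b y} \<subseteq> {a. a < b \<and> coprime a b}"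
      using b by (auto simp: coprime_commute)
    show "inj_on (\<lambda>a. if a = 0 then b else a) {a. a < b \<and> coprime a b}"
      by (auto simp: inj_on_def)
    show "(\<lambda>a. if a = 0 then b else a) ` {a. a < b \<and> coprime a b} \<subseteq> {y. 1 \<le> y \<and> y \<le> b \<and> coprime b y}"
      using b by (auto simp: coprime_commute)
  qed auto
  thus ?thesis by (simp add: cb_def e)
qed

lemma Hr_H: assumes t: "t \<ge> 1" shows "Hr t = real (H t)"
proof -
  have "Hr t = (\<Sum>b\<in>{1..t}. real (Wn t b) * real (cb b (real b)))"
    unfolding Hr_def using sum_pairs[of 1 t] by simp
  also have "\<dots> = (\<Sum>b\<in>{1..t}. real (Wn t b * card {y. 1 \<le> y \<and> y \<le> b \<and> coprime b y}))"
  proof (rule sum.cong)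
    fix b assume "b \<in> {1..t}"
    hence "1 \<le> b" by simp
    thus "real (Wn t b) * real (cb b (real b)) = real (Wn t b * card {y. 1 \<le> y \<and> y \<le> b \<and> coprime b y})"
      using card_coprime_shift[of b] by simp
  qed simp
  also have "\<dots> = real (\<Sum>b\<in>{1..t}. \<Sum>y\<in>{y. 1 \<le> y \<and> y \<le> b \<and> coprime b y}. Wn t b)"
    by (simp add: mult.commute)
  also have "(\<Sum>b\<in>{1..t}. \<Sum>y\<in>{y. 1 \<le> y \<and> y \<le> b \<and> coprime b y}. Wn t b)
      = (\<Sum>(x,y)\<in>Sigma {1..t} (\<lambda>b. {y. 1 \<le> y \<and> y \<le> b \<and> coprime b y}). Wn t x)"
    by (rule sum.Sigma) auto
  also have "Sigma {1..t} (\<lambda>b. {y. 1 \<le> y \<and> y \<le> b \<and> coprime b y}) = {(x, y). 1 \<le> y \<and> y \<le> x \<and> x \<le> t \<and> coprime x y}"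
    by auto
  also have "(\<Sum>(x,y)\<in>{(x, y). 1 \<le> y \<and> y \<le> x \<and> x \<le> t \<and> coprime x y}. Wn t x) = H t"
    by (simp add: H_def Wn_def)
  finally show ?thesis .
qed

lemma card_multiples: "d \<ge> 1 \<Longrightarrow> card {b \<in> {1..t}. d dvd b} = t div d"
proof -
  assume d: "d \<ge> (1::nat)"
  have "{b \<in> {1..t}. d dvd b} = (\<lambda>k. d * k) ` {1..t div d}"
  proof (rule set_eqI, rule iffI)
    fix b assume "b \<in> {b \<in> {1..t}. d dvd b}"
    hence bb: "1 \<le> b" "b \<le> t" "d dvd b" by auto
    then obtain k where "b = d * k" by (auto elim: dvdE)
    hence k: "b = d * k" "1 \<le> b" "b \<le> t" using bb by auto
    have "1 \<le> k" using k by (cases k) auto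
    moreover have "k \<le> t div d" using k d by (metis div_le_mono nonzero_mult_div_cancel_left not_one_le_zero)
    ultimately show "b \<in> (\<lambda>k. d * k) ` {1..t div d}" using k by auto
  next
    fix b assume "b \<in> (\<lambda>k. d * k) ` {1..t div d}"
    then obtain k where k0: "k \<in> {1..t div d}" "b = d * k" by blast
    hence k: "b = d * k" "1 \<le> k" "k \<le> t div d" by auto
    have "d * k \<le> d * (t div d)" using k by simp
    also have "\<dots> \<le> t" by simp
    finally show "b \<in> {b \<in> {1..t}. d dvd b}" using k d by auto
  qed
  moreover have "inj_on (\<lambda>k. d * k) {1..t div d}" using d by (auto simp: inj_on_def)
  ultimately show ?thesis by (simp add: card_image)
qed

lemma sum_ind: "(\<Sum>x\<in>A. if Pr x then 1 else 0) = card {x\<in>A. Pr x}" if "finite A"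
  using that by (simp add: sum.If_cases Int_def)

lemma divisor_sum: "(\<Sum>b\<in>{1..t}. card {d. d dvd b}) = (\<Sum>d\<in>{1..t}. t div d)"
proof -
  have "(\<Sum>b\<in>{1..t}. card {d. d dvd b}) = (\<Sum>b\<in>{1..t}. \<Sum>d\<in>{1..t}. if d dvd b then 1 else 0)"
  proof (rule sum.cong)
    fix b assume b: "b \<in> {1..t}"
    have "{d. d dvd b} = {d \<in> {1..t}. d dvd b}" using b
      by (auto dest: dvd_imp_le intro: Suc_leI simp: dvd_pos_nat)
    thus "card {d. d dvd b} = (\<Sum>d\<in>{1..t}. if d dvd b then 1 else 0)"
      by (simp only: sum_ind[OF finite_atLeastAtMost])
  qed simp
  also have "\<dots> = (\<Sum>d\<in>{1..t}. \<Sum>b\<in>{1..t}. if d dvd b then 1 else 0)" by (rule sum.swap)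
  also have "\<dots> = (\<Sum>d\<in>{1..t}. t div d)"
  proof (rule sum.cong)
    fix d assume "d \<in> {1..t}"
    hence "1 \<le> d" by simp
    thus "(\<Sum>b\<in>{1..t}. if d dvd b then 1 else 0) = t div d"
      using card_multiples[of d t] by (simp only: sum_ind[OF finite_atLeastAtMost])
  qed simp
  finally show ?thesis .
qed

lemma harm_bound: "t \<ge> 1 \<Longrightarrow> (\<Sum>d\<in>{1..t}. real (t div d)) \<le> real t * (1 + ln (real t))"
proof -
  assume t: "t \<ge> 1"
  have "(\<Sum>d\<in>{1..t}. real (t div d)) \<le> (\<Sum>d\<in>{1..t}. real t / real d)"
    by (rule sum_mono) (rule of_nat_div_le_of_nat)
  also have "\<dots> = real t * harm t"
    by (simp add: harm_def sum_distrib_left divide_inverse)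
  also have "harm t \<le> 1 + ln (real t)"
    using euler_mascheroni_sequence_decreasing[of 1 t] t by (simp add: harm_def)
  hence "real t * harm t \<le> real t * (1 + ln (real t))" by (intro mult_left_mono) auto
  finally show ?thesis .
qed



lemma Delta_bound:
  assumes t: "t \<ge> 1" and \<sigma>: "0 \<le> \<sigma>" "\<sigma> < 1"
  shows "\<bar>Hr t * of_rat \<sigma> - sum (wt t) (Iv t 0 \<sigma>)\<bar> \<le> 2 * (real t)\<^sup>2 * (1 + ln (real t))"
proof -
  define s where "s = (of_rat \<sigma> :: real)"
  have s01: "0 \<le> s" "s \<le> 1" using \<sigma> by (auto simp: s_def)
  have N: "sum (wt t) (Iv t 0 \<sigma>) = (\<Sum>b\<in>{1..t}. real (Wn t b) * real (cb b (s * real b)))"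
    using sum_pairs[of \<sigma> t] \<sigma> by (simp add: s_def)
  have Hs: "Hr t = (\<Sum>b\<in>{1..t}. real (Wn t b) * real (cb b (real b)))"
    unfolding Hr_def using sum_pairs[of 1 t] by simp
  have "Hr t * of_rat \<sigma> - sum (wt t) (Iv t 0 \<sigma>) =
      (\<Sum>b\<in>{1..t}. real (Wn t b) * (s * real (cb b (real b)) - real (cb b (s * real b))))"
  proof -
    have "Hr t * of_rat \<sigma> = (\<Sum>b\<in>{1..t}. real (Wn t b) * real (cb b (real b)) * s)"
      unfolding Hs s_def by (rule sum_distrib_right)
    hence "Hr t * of_rat \<sigma> - sum (wt t) (Iv t 0 \<sigma>) =
      (\<Sum>b\<in>{1..t}. real (Wn t b) * real (cb b (real b)) * s - real (Wn t b) * real (cb b (s * real b)))"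
      unfolding N by (simp only: sum_subtractf)
    also have "\<dots> = (\<Sum>b\<in>{1..t}. real (Wn t b) * (s * real (cb b (real b)) - real (cb b (s * real b))))"
      by (rule sum.cong) (simp_all add: algebra_simps)
    finally show ?thesis .
  qed
  hence "\<bar>Hr t * of_rat \<sigma> - sum (wt t) (Iv t 0 \<sigma>)\<bar> \<le>
      (\<Sum>b\<in>{1..t}. \<bar>real (Wn t b) * (s * real (cb b (real b)) - real (cb b (s * real b)))\<bar>)"
    by (simp only: sum_abs)
  also have "\<dots> \<le> (\<Sum>b\<in>{1..t}. 2 * real t * real (card {d. d dvd b}))"
  proof (rule sum_mono)
    fix b assume b: "b \<in> {1..t}"
    hence b1: "b \<ge> 1" by simp
    have W: "real (Wn t b) \<le> real t" unfolding Wn_def of_nat_le_iff by (rule div_times_less_eq_dividend)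
    have d: "\<bar>real (cb b (s * real b)) - s * real (cb b (real b))\<bar> \<le> 2 * 2 ^ card (prime_factors b)"
      by (rule cb_disc[OF b1 s01])
    have p: "(2::real) ^ card (prime_factors b) \<le> real (card {d. d dvd b})"
      using pow_pf_le_divisors[OF b1] by (metis of_nat_le_iff of_nat_numeral of_nat_power)
    have "\<bar>real (Wn t b) * (s * real (cb b (real b)) - real (cb b (s * real b)))\<bar>
        = real (Wn t b) * \<bar>real (cb b (s * real b)) - s * real (cb b (real b))\<bar>"
      by (simp add: abs_mult abs_minus_commute)
    also have "\<dots> \<le> real t * (2 * real (card {d. d dvd b}))"
    proof -
      have dd: "\<bar>real (cb b (s * real b)) - s * real (cb b (real b))\<bar> \<le> 2 * real (card {d. d dvd b})"
        using d p by linarith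
      show ?thesis using W dd by (intro mult_mono) auto
    qed
    finally show "\<bar>real (Wn t b) * (s * real (cb b (real b)) - real (cb b (s * real b)))\<bar>
        \<le> 2 * real t * real (card {d. d dvd b})" by simp
  qed
  also have "\<dots> = 2 * real t * real (\<Sum>b\<in>{1..t}. card {d. d dvd b})"
    by (simp add: sum_distrib_left)
  also have "\<dots> = 2 * real t * (\<Sum>d\<in>{1..t}. real (t div d))"
    by (simp only: divisor_sum of_nat_sum)
  also have "\<dots> \<le> 2 * real t * (real t * (1 + ln (real t)))"
    using harm_bound[OF t] by (intro mult_left_mono) auto
  finally show ?thesis by (simp add: power2_eq_square mult.assoc)
qed

theorem proposition2:
  shows "\<exists>C. \<forall>\<^sub>F t in sequentially.
           (\<forall>x::real. \<bar>P t x - Pi_ref t x\<bar> \<le> C * (real t)\<^sup>2 * ln (real t))"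
proof (intro exI[of _ 11] eventually_sequentiallyI[of 3] allI)
  fix t :: nat and x :: real
  assume t3: "3 \<le> t"
  hence t: "t \<ge> 1" by simp
  define \<Delta> where "\<Delta> = 2 * (real t)\<^sup>2 * (1 + ln (real t))"
  have ln1: "1 \<le> ln (real t)"
  proof -
    have "exp 1 \<le> real t" using exp_le t3 by linarith
    thus ?thesis using ln_le_cancel_iff[of "exp 1" "real t"] t3 by simp
  qed
  have D0: "\<Delta> \<ge> 0" using ln1 by (simp add: \<Delta>_def)
  have hD: "\<forall>\<sigma>::rat. 0 \<le> \<sigma> \<and> \<sigma> < 1 \<longrightarrow> \<bar>Hr t * of_rat \<sigma> - sum (wt t) (Iv t 0 \<sigma>)\<bar> \<le> \<Delta>"
    using Delta_bound[OF t] by (simp add: \<Delta>_def)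
  have mb: "\<bar>P t x - x\<^sup>2 / (2 * Hr t)\<bar> \<le> 2 * \<Delta> + 3 * real t" by (rule main_bound[OF t D0 hD])
  have pi: "Pi_ref t x = x\<^sup>2 / (2 * Hr t)" by (simp add: Pi_ref_def Hr_H[OF t])
  have tt: "real t \<le> (real t)\<^sup>2" using t by (simp add: power2_eq_square)
  have "2 * \<Delta> + 3 * real t = 4 * (real t)\<^sup>2 + 4 * (real t)\<^sup>2 * ln (real t) + 3 * real t"
    by (simp add: \<Delta>_def algebra_simps)
  also have "\<dots> \<le> 4 * ((real t)\<^sup>2 * ln (real t)) + 4 * (real t)\<^sup>2 * ln (real t) + 3 * ((real t)\<^sup>2 * ln (real t))"
  proof -
    have a: "(real t)\<^sup>2 \<le> (real t)\<^sup>2 * ln (real t)" using ln1 by (simp add: mult_le_cancel_left1)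
    have b: "real t \<le> (real t)\<^sup>2 * ln (real t)" using tt a by linarith
    show ?thesis using a b by linarith
  qed
  also have "\<dots> = 11 * (real t)\<^sup>2 * ln (real t)" by simp
  finally show "\<bar>P t x - Pi_ref t x\<bar> \<le> 11 * (real t)\<^sup>2 * ln (real t)" using mb pi by simp
qed


end
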